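(* Let $0\le z<t\le d\le n$ and consider any $((t,n;z))_q$ QSS scheme whose secret consists of $m$ qudits. Then $$\mathrm{CC}_n(d)\geq\frac{d\,m}{d-z}.$$
   Context: A QSS scheme on $n$ parties is an encoding of a quantum secret into $n$ shares, share $j$ given to party $j\in[n]$. A set $P\subseteq[n]$ is authorized if the secret can be recovered from the shares of the parties in $P$, and unauthorized if those shares contain no information about the secret. A $((t,n;z))_q$ QSS scheme is one in which every set of at least $t$ parties is authorized, every set of at most $z$ parties is unauthorized, and the secret consists of $m$ qudits and the shares of qudits, all of dimension $q$. For an authorized set $A$, a fixed (a priori) portion of each share of a party in $A$ is sent to a combiner, and $\mathrm{CC}_n(A)=\sum_{j\in A}h_{j,A}$ with $h_{j,A}$ the number of qudits sent by party $j$. For $t\le d\le n$, $\mathrm{CC}_n(d)=\max_{A\subseteq[n],|A|=d}\mathrm{CC}_n(A)$. *)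

theory Defs
  imports Complex_Main "HOL-Library.FuncSet"
begin

text \<open>A register is a finite set R of labels, each label carrying one qudit of
dimension q. Operators on (or between) registers are complex matrices
indexed by basis states.\<close>

type_synonym ('a, 'b) qop = "('b \<Rightarrow> nat) \<Rightarrow> ('a \<Rightarrow> nat) \<Rightarrow> complex"

definition qbasis :: "nat \<Rightarrow> 'a set \<Rightarrow> ('a \<Rightarrow> nat) set" where
  "qbasis q R = PiE R (\<lambda>_. {..<q})"

definition is_density :: "nat \<Rightarrow> 'a set \<Rightarrow> ('a, 'a) qop \<Rightarrow> bool" where
  "is_density q R \<rho> \<longleftrightarrow>
     (\<forall>v :: ('a \<Rightarrow> nat) \<Rightarrow> complex.
        let Q = (\<Sum>x\<in>qbasis q R. \<Sum>y\<in>qbasis q R. cnj (v x) * \<rho> x y * v y)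
        in Im Q = 0 \<and> Re Q \<ge> 0) \<and>
     (\<Sum>x\<in>qbasis q R. \<rho> x x) = 1"

text \<open>Equality of operators on register R (only basis entries matter).\<close>
definition op_eq :: "nat \<Rightarrow> 'a set \<Rightarrow> ('a, 'a) qop \<Rightarrow> ('a, 'a) qop \<Rightarrow> bool" where
  "op_eq q R A B \<longleftrightarrow> (\<forall>x\<in>qbasis q R. \<forall>y\<in>qbasis q R. A x y = B x y)"

text \<open>Quantum channel (CPTP map) from register R to register S, given by a finite
list of Kraus operators satisfying the completeness relation.\<close>
definition is_channel :: "nat \<Rightarrow> 'a set \<Rightarrow> 'b set \<Rightarrow> ('a, 'b) qop list \<Rightarrow> bool" where
  "is_channel q R S Ks \<longleftrightarrow>
     (\<forall>x\<in>qbasis q R. \<forall>x'\<in>qbasis q R.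
        (\<Sum>K\<leftarrow>Ks. \<Sum>y\<in>qbasis q S. cnj (K y x) * K y x') = (if x = x' then 1 else 0))"

definition apply_channel ::
  "nat \<Rightarrow> 'a set \<Rightarrow> 'b set \<Rightarrow> ('a, 'b) qop list \<Rightarrow> ('a, 'a) qop \<Rightarrow> ('b, 'b) qop" where
  "apply_channel q R S Ks \<rho> = (\<lambda>y y'.
     \<Sum>K\<leftarrow>Ks. \<Sum>x\<in>qbasis q R. \<Sum>x'\<in>qbasis q R. K y x * \<rho> x x' * cnj (K y' x'))"

text \<open>Partial trace of an operator on register S, keeping the subregister T \<subseteq> S
(tracing out S - T).\<close>
definition merge_basis :: "'a set \<Rightarrow> ('a \<Rightarrow> nat) \<Rightarrow> ('a \<Rightarrow> nat) \<Rightarrow> 'a \<Rightarrow> nat" where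
  "merge_basis T u w = (\<lambda>l. if l \<in> T then u l else w l)"

definition ptrace :: "nat \<Rightarrow> 'a set \<Rightarrow> 'a set \<Rightarrow> ('a, 'a) qop \<Rightarrow> ('a, 'a) qop" where
  "ptrace q S T \<rho> = (\<lambda>u u'.
     \<Sum>w\<in>qbasis q (S - T). \<rho> (merge_basis T u w) (merge_basis T u' w))"

text \<open>Party j holds share j
consisting of s j qudits, labelled (j, l) with l < s j. The encoding is a
quantum channel E from the secret register to all shares.\<close>

definition secret_reg :: "nat \<Rightarrow> nat set" where
  "secret_reg m = {..<m}"

definition share_reg :: "(nat \<Rightarrow> nat) \<Rightarrow> nat set \<Rightarrow> (nat \<times> nat) set" where
  "share_reg s P = Sigma P (\<lambda>j. {..<s j})"

definition parties :: "nat \<Rightarrow> nat set" where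
  "parties n = {1..n}"

definition recoverable_from ::
  "nat \<Rightarrow> nat \<Rightarrow> nat \<Rightarrow> (nat \<Rightarrow> nat) \<Rightarrow> (nat, nat \<times> nat) qop list \<Rightarrow> (nat \<times> nat) set \<Rightarrow> bool" where
  "recoverable_from q n m s E T \<longleftrightarrow>
     (\<exists>D :: (nat \<times> nat, nat) qop list. is_channel q T (secret_reg m) D \<and>
        (\<forall>\<rho>. is_density q (secret_reg m) \<rho> \<longrightarrow>
           op_eq q (secret_reg m)
             (apply_channel q T (secret_reg m) D
                (ptrace q (share_reg s (parties n)) T
                   (apply_channel q (secret_reg m) (share_reg s (parties n)) E \<rho>)))
             \<rho>))"

definition authorized ::
  "nat \<Rightarrow> nat \<Rightarrow> nat \<Rightarrow> (nat \<Rightarrow> nat) \<Rightarrow> (nat, nat \<times> nat) qop list \<Rightarrow> nat set \<Rightarrow> bool" where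
  "authorized q n m s E P \<longleftrightarrow> recoverable_from q n m s E (share_reg s P)"

definition unauthorized ::
  "nat \<Rightarrow> nat \<Rightarrow> nat \<Rightarrow> (nat \<Rightarrow> nat) \<Rightarrow> (nat, nat \<times> nat) qop list \<Rightarrow> nat set \<Rightarrow> bool" where
  "unauthorized q n m s E P \<longleftrightarrow>
     (\<forall>\<rho> \<sigma>. is_density q (secret_reg m) \<rho> \<longrightarrow> is_density q (secret_reg m) \<sigma> \<longrightarrow>
        op_eq q (share_reg s P)
          (ptrace q (share_reg s (parties n)) (share_reg s P)
             (apply_channel q (secret_reg m) (share_reg s (parties n)) E \<rho>))
          (ptrace q (share_reg s (parties n)) (share_reg s P)
             (apply_channel q (secret_reg m) (share_reg s (parties n)) E \<sigma>)))"

definition is_QSS ::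
  "nat \<Rightarrow> nat \<Rightarrow> nat \<Rightarrow> nat \<Rightarrow> nat \<Rightarrow> (nat \<Rightarrow> nat) \<Rightarrow> (nat, nat \<times> nat) qop list \<Rightarrow> bool" where
  "is_QSS q t n z m s E \<longleftrightarrow>
     is_channel q (secret_reg m) (share_reg s (parties n)) E \<and>
     (\<forall>P. P \<subseteq> parties n \<longrightarrow> card P \<ge> t \<longrightarrow> authorized q n m s E P) \<and>
     (\<forall>P. P \<subseteq> parties n \<longrightarrow> card P \<le> z \<longrightarrow> unauthorized q n m s E P)"

text \<open>Communication (reconstruction) protocol: for every authorized set A, a fixed
portion H A of the qudits of the shares of the parties in A (h_{j,A} qudits of
share j, namely those in H A with first component j) is sent to the combiner,
who recovers the secret from these qudits alone.\<close>
definition is_comm_protocol ::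
  "nat \<Rightarrow> nat \<Rightarrow> nat \<Rightarrow> (nat \<Rightarrow> nat) \<Rightarrow> (nat, nat \<times> nat) qop list
   \<Rightarrow> (nat set \<Rightarrow> (nat \<times> nat) set) \<Rightarrow> bool" where
  "is_comm_protocol q n m s E H \<longleftrightarrow>
     (\<forall>A. A \<subseteq> parties n \<longrightarrow> authorized q n m s E A \<longrightarrow>
        H A \<subseteq> share_reg s A \<and> recoverable_from q n m s E (H A))"

definition h_sent :: "(nat set \<Rightarrow> (nat \<times> nat) set) \<Rightarrow> nat \<Rightarrow> nat set \<Rightarrow> nat" where
  "h_sent H j A = card {l. (j, l) \<in> H A}"

definition CC_set :: "(nat set \<Rightarrow> (nat \<times> nat) set) \<Rightarrow> nat set \<Rightarrow> nat" where
  "CC_set H A = (\<Sum>j\<in>A. h_sent H j A)"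

definition CC :: "nat \<Rightarrow> (nat set \<Rightarrow> (nat \<times> nat) set) \<Rightarrow> nat \<Rightarrow> nat" where
  "CC n H d = Max {CC_set H A | A. A \<subseteq> parties n \<and> card A = d}"

end

theory Submission
  imports Defs
begin

lemma cs_real:
  fixes a :: "'b \<Rightarrow> real"
  assumes "finite B"
  shows "(\<Sum>b\<in>B. a b)^2 \<le> real (card B) * (\<Sum>b\<in>B. (a b)^2)"
proof -
  have "0 \<le> (\<Sum>i\<in>B. \<Sum>j\<in>B. (a i - a j)^2)" by (intro sum_nonneg) auto
  also have "\<dots> = (\<Sum>i\<in>B. \<Sum>j\<in>B. (a i)^2 + (a j)^2 - 2 * a i * a j)"
    by (simp add: power2_diff)
  also have "\<dots> = 2 * (real (card B) * (\<Sum>b\<in>B. (a b)^2) - (\<Sum>b\<in>B. a b)^2)"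
    by (simp add: sum.distrib sum_subtractf sum_distrib_left sum_distrib_right power2_eq_square
        algebra_simps)
  finally show ?thesis by simp
qed

lemma cs_cmod:
  fixes z :: "'b \<Rightarrow> complex"
  assumes "finite B"
  shows "(cmod (\<Sum>b\<in>B. z b))^2 \<le> real (card B) * (\<Sum>b\<in>B. (cmod (z b))^2)"
proof -
  have "cmod (\<Sum>b\<in>B. z b) \<le> (\<Sum>b\<in>B. cmod (z b))" by (rule norm_sum)
  hence "(cmod (\<Sum>b\<in>B. z b))^2 \<le> (\<Sum>b\<in>B. cmod (z b))^2"
    by (simp add: power_mono)
  also have "\<dots> \<le> real (card B) * (\<Sum>b\<in>B. (cmod (z b))^2)" by (rule cs_real[OF assms])
  finally show ?thesis .
qed

lemma pull4: "(\<Sum>a\<in>A. \<Sum>b\<in>B. \<Sum>c\<in>C. \<Sum>d\<in>D. \<Sum>p\<in>P. f a b c d p)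
   = (\<Sum>p\<in>P. \<Sum>a\<in>A. \<Sum>b\<in>B. \<Sum>c\<in>C. \<Sum>d\<in>D. f a b c d p)"
proof -
  have "(\<Sum>a\<in>A. \<Sum>b\<in>B. \<Sum>c\<in>C. \<Sum>d\<in>D. \<Sum>p\<in>P. f a b c d p)
      = (\<Sum>a\<in>A. \<Sum>b\<in>B. \<Sum>c\<in>C. \<Sum>p\<in>P. \<Sum>d\<in>D. f a b c d p)"
    by (intro sum.cong refl sum.swap)
  also have "\<dots> = (\<Sum>a\<in>A. \<Sum>b\<in>B. \<Sum>p\<in>P. \<Sum>c\<in>C. \<Sum>d\<in>D. f a b c d p)"
    by (intro sum.cong refl sum.swap)
  also have "\<dots> = (\<Sum>a\<in>A. \<Sum>p\<in>P. \<Sum>b\<in>B. \<Sum>c\<in>C. \<Sum>d\<in>D. f a b c d p)"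
    by (intro sum.cong refl sum.swap)
  also have "\<dots> = (\<Sum>p\<in>P. \<Sum>a\<in>A. \<Sum>b\<in>B. \<Sum>c\<in>C. \<Sum>d\<in>D. f a b c d p)"
    by (rule sum.swap)
  finally show ?thesis .
qed

lemma block44: "(\<Sum>x\<in>X. \<Sum>c\<in>C. \<Sum>y\<in>Y. \<Sum>c'\<in>C'. \<Sum>b\<in>B. \<Sum>e\<in>E. \<Sum>b'\<in>B'. \<Sum>e'\<in>E'. g x c y c' b e b' e')
  = (\<Sum>b\<in>B. \<Sum>e\<in>E. \<Sum>b'\<in>B'. \<Sum>e'\<in>E'. \<Sum>x\<in>X. \<Sum>c\<in>C. \<Sum>y\<in>Y. \<Sum>c'\<in>C'. g x c y c' b e b' e')"
proof -
  have "(\<Sum>x\<in>X. \<Sum>c\<in>C. \<Sum>y\<in>Y. \<Sum>c'\<in>C'. \<Sum>b\<in>B. \<Sum>e\<in>E. \<Sum>b'\<in>B'. \<Sum>e'\<in>E'. g x c y c' b e b' e')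
     = (\<Sum>b\<in>B. \<Sum>x\<in>X. \<Sum>c\<in>C. \<Sum>y\<in>Y. \<Sum>c'\<in>C'. \<Sum>e\<in>E. \<Sum>b'\<in>B'. \<Sum>e'\<in>E'. g x c y c' b e b' e')"
    by (rule pull4)
  also have "\<dots> = (\<Sum>b\<in>B. \<Sum>e\<in>E. \<Sum>x\<in>X. \<Sum>c\<in>C. \<Sum>y\<in>Y. \<Sum>c'\<in>C'. \<Sum>b'\<in>B'. \<Sum>e'\<in>E'. g x c y c' b e b' e')"
    by (intro sum.cong refl pull4)
  also have "\<dots> = (\<Sum>b\<in>B. \<Sum>e\<in>E. \<Sum>b'\<in>B'. \<Sum>x\<in>X. \<Sum>c\<in>C. \<Sum>y\<in>Y. \<Sum>c'\<in>C'. \<Sum>e'\<in>E'. g x c y c' b e b' e')"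
    by (intro sum.cong refl pull4)
  also have "\<dots> = (\<Sum>b\<in>B. \<Sum>e\<in>E. \<Sum>b'\<in>B'. \<Sum>e'\<in>E'. \<Sum>x\<in>X. \<Sum>c\<in>C. \<Sum>y\<in>Y. \<Sum>c'\<in>C'. g x c y c' b e b' e')"
    by (intro sum.cong refl pull4)
  finally show ?thesis .
qed
lemma rot3: "(\<Sum>c\<in>C. \<Sum>y\<in>Y. \<Sum>c'\<in>C'. f c y c') = (\<Sum>y\<in>Y. \<Sum>c'\<in>C'. \<Sum>c\<in>C. f c y c')"
proof -
  have "(\<Sum>c\<in>C. \<Sum>y\<in>Y. \<Sum>c'\<in>C'. f c y c') = (\<Sum>y\<in>Y. \<Sum>c\<in>C. \<Sum>c'\<in>C'. f c y c')"
    by (rule sum.swap)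
  also have "\<dots> = (\<Sum>y\<in>Y. \<Sum>c'\<in>C'. \<Sum>c\<in>C. f c y c')"
    by (intro sum.cong refl sum.swap)
  finally show ?thesis .
qed

lemma cmod_sq_cnj: "complex_of_real ((cmod z)^2) = z * cnj z"
  by (rule complex_norm_square)

lemma half_core:
  fixes \<Psi> :: "'x \<Rightarrow> 'b \<Rightarrow> 'c \<Rightarrow> 'e \<Rightarrow> complex"
  assumes fX: "finite X" and fB: "finite B" and fC: "finite C" and fE: "finite E"
  and H1: "\<And>x y c c'. x\<in>X \<Longrightarrow> y\<in>X \<Longrightarrow> c\<in>C \<Longrightarrow> c'\<in>C \<Longrightarrow>
     (\<Sum>b\<in>B. \<Sum>e\<in>E. \<Psi> x b c e * cnj (\<Psi> y b c' e)) = (if x = y then \<tau> c c' else 0)"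
  and H2: "\<And>x e e'. x\<in>X \<Longrightarrow> e\<in>E \<Longrightarrow> e'\<in>E \<Longrightarrow>
     (\<Sum>b\<in>B. \<Sum>c\<in>C. \<Psi> x b c e * cnj (\<Psi> x b c e')) = \<omega> e e'"
  shows "real (card X) * (\<Sum>e\<in>E. \<Sum>e'\<in>E. (cmod (\<omega> e e'))^2)
           \<le> real (card B) * (\<Sum>c\<in>C. \<Sum>c'\<in>C. (cmod (\<tau> c c'))^2)"
proof -
  define N where "N = real (card X)"
  define T where "T = (\<Sum>c\<in>C. \<Sum>c'\<in>C. (cmod (\<tau> c c'))^2)"
  define W where "W = (\<Sum>e\<in>E. \<Sum>e'\<in>E. (cmod (\<omega> e e'))^2)"
  define \<rho> where "\<rho> b e b' e' = (\<Sum>x\<in>X. \<Sum>c\<in>C. \<Psi> x b c e * cnj (\<Psi> x b' c e'))" for b e b' e'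
  define PBE where "PBE = (\<Sum>b\<in>B. \<Sum>e\<in>E. \<Sum>b'\<in>B. \<Sum>e'\<in>E. (cmod (\<rho> b e b' e'))^2)"
  define PRC where "PRC = (\<Sum>x\<in>X. \<Sum>c\<in>C. \<Sum>y\<in>X. \<Sum>c'\<in>C.
        (cmod (\<Sum>b\<in>B. \<Sum>e\<in>E. \<Psi> x b c e * cnj (\<Psi> y b c' e)))^2)"
  have PRC_val: "PRC = N * T"
  proof -
    have "PRC = (\<Sum>x\<in>X. \<Sum>c\<in>C. \<Sum>y\<in>X. \<Sum>c'\<in>C. (if x = y then (cmod (\<tau> c c'))^2 else 0))"
      unfolding PRC_def by (intro sum.cong refl) (simp add: H1)
    also have "\<dots> = (\<Sum>x\<in>X. \<Sum>c\<in>C. \<Sum>c'\<in>C. (cmod (\<tau> c c'))^2)"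
      apply (intro sum.cong refl)
      apply (subst sum.swap)
      using fX by (simp add: if_distrib)
    also have "\<dots> = N * T" by (simp add: N_def T_def)
    finally show ?thesis .
  qed
  have PRC_PBE: "PRC = PBE"
  proof -
    let ?t = "\<lambda>x c y c' b e b' e'. \<Psi> x b c e * cnj (\<Psi> y b c' e) * (cnj (\<Psi> x b' c e') * \<Psi> y b' c' e')"
    have "complex_of_real PRC = (\<Sum>x\<in>X. \<Sum>c\<in>C. \<Sum>y\<in>X. \<Sum>c'\<in>C. \<Sum>b'\<in>B. \<Sum>e'\<in>E. \<Sum>b\<in>B. \<Sum>e\<in>E. ?t x c y c' b e b' e')"
      unfolding PRC_def of_real_sum cmod_sq_cnj
      by (simp add: sum_distrib_left sum_distrib_right cnj_sum)
    also have "\<dots> = (\<Sum>b'\<in>B. \<Sum>e'\<in>E. \<Sum>b\<in>B. \<Sum>e\<in>E. \<Sum>x\<in>X. \<Sum>c\<in>C. \<Sum>y\<in>X. \<Sum>c'\<in>C. ?t x c y c' b e b' e')"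
      by (rule block44)
    also have "\<dots> = (\<Sum>b'\<in>B. \<Sum>e'\<in>E. \<Sum>b\<in>B. \<Sum>e\<in>E. \<Sum>x\<in>X. \<Sum>y\<in>X. \<Sum>c'\<in>C. \<Sum>c\<in>C. ?t x c y c' b e b' e')"
      by (intro sum.cong refl rot3)
    also have "\<dots> = complex_of_real PBE"
      unfolding PBE_def of_real_sum cmod_sq_cnj \<rho>_def
      by (simp add: sum_distrib_left sum_distrib_right cnj_sum mult_ac)
    finally show ?thesis by (simp only: of_real_eq_iff)
  qed
  have rhoE: "(\<Sum>b\<in>B. \<rho> b e b e') = complex_of_real N * \<omega> e e'" if "e \<in> E" "e' \<in> E" for e e'
  proof -
    have "(\<Sum>b\<in>B. \<rho> b e b e') = (\<Sum>x\<in>X. \<Sum>b\<in>B. \<Sum>c\<in>C. \<Psi> x b c e * cnj (\<Psi> x b c e'))"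
      unfolding \<rho>_def by (rule sum.swap)
    also have "\<dots> = (\<Sum>x\<in>X. \<omega> e e')" using H2 that by simp
    finally show ?thesis by (simp add: N_def)
  qed
  have "N^2 * W = (\<Sum>e\<in>E. \<Sum>e'\<in>E. (cmod (\<Sum>b\<in>B. \<rho> b e b e'))^2)"
    unfolding W_def by (simp add: rhoE sum_distrib_left norm_mult power_mult_distrib N_def)
  also have "\<dots> \<le> (\<Sum>e\<in>E. \<Sum>e'\<in>E. real (card B) * (\<Sum>b\<in>B. (cmod (\<rho> b e b e'))^2))"
    by (intro sum_mono cs_cmod fB)
  also have "\<dots> \<le> (\<Sum>e\<in>E. \<Sum>e'\<in>E. real (card B) * (\<Sum>b\<in>B. \<Sum>b'\<in>B. (cmod (\<rho> b e b' e'))^2))"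
  proof (intro sum_mono mult_left_mono)
    fix e e' b assume "b \<in> B"
    show "(cmod (\<rho> b e b e'))^2 \<le> (\<Sum>b'\<in>B. (cmod (\<rho> b e b' e'))^2)"
      using member_le_sum[of b B "\<lambda>b'. (cmod (\<rho> b e b' e'))^2"] \<open>b \<in> B\<close> fB by simp
  qed auto
  also have "\<dots> = real (card B) * PBE"
  proof -
    have "(\<Sum>e\<in>E. \<Sum>e'\<in>E. \<Sum>b\<in>B. \<Sum>b'\<in>B. (cmod (\<rho> b e b' e'))^2)
        = (\<Sum>e\<in>E. \<Sum>b\<in>B. \<Sum>e'\<in>E. \<Sum>b'\<in>B. (cmod (\<rho> b e b' e'))^2)"
      by (intro sum.cong refl sum.swap)
    also have "\<dots> = (\<Sum>b\<in>B. \<Sum>e\<in>E. \<Sum>e'\<in>E. \<Sum>b'\<in>B. (cmod (\<rho> b e b' e'))^2)"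
      by (rule sum.swap)
    also have "\<dots> = PBE" unfolding PBE_def
      by (intro sum.cong refl sum.swap)
    finally have eq: "(\<Sum>e\<in>E. \<Sum>e'\<in>E. \<Sum>b\<in>B. \<Sum>b'\<in>B. (cmod (\<rho> b e b' e'))^2) = PBE" .
    show ?thesis by (simp only: eq[symmetric] sum_distrib_left)
  qed
  also have "\<dots> = real (card B) * (N * T)" using PRC_PBE PRC_val by simp
  finally have *: "N * (N * W) \<le> N * (real (card B) * T)" by (simp add: power2_eq_square algebra_simps)
  show ?thesis
  proof (cases "N = 0")
    case True
    then show ?thesis unfolding N_def T_def by (simp add: sum_nonneg)
  next
    case False
    hence "N > 0" unfolding N_def by simp
    with * have "N * W \<le> real (card B) * T" by (simp add: mult_le_cancel_left)
    then show ?thesis unfolding N_def W_def T_def .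
  qed
qed

lemma pos_of_trace:
  fixes \<omega> :: "'e \<Rightarrow> 'e \<Rightarrow> complex"
  assumes fE: "finite E" and nz: "(\<Sum>e\<in>E. \<omega> e e) \<noteq> 0"
  shows "0 < (\<Sum>e\<in>E. \<Sum>e'\<in>E. (cmod (\<omega> e e'))^2)"
proof -
  obtain e0 where e0: "e0 \<in> E" "\<omega> e0 e0 \<noteq> 0"
    using nz sum.neutral[of E "\<lambda>e. \<omega> e e"] by blast
  have "0 < (cmod (\<omega> e0 e0))^2" using e0 by simp
  also have "\<dots> \<le> (\<Sum>e'\<in>E. (cmod (\<omega> e0 e'))^2)"
    using member_le_sum[of e0 E "\<lambda>e'. (cmod (\<omega> e0 e'))^2"] e0 fE by simp
  also have "\<dots> \<le> (\<Sum>e\<in>E. \<Sum>e'\<in>E. (cmod (\<omega> e e'))^2)"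
    using member_le_sum[of e0 E "\<lambda>e. \<Sum>e'\<in>E. (cmod (\<omega> e e'))^2"] e0 fE
    by (simp add: sum_nonneg)
  finally show ?thesis .
qed

lemma core:
  fixes \<Psi> :: "'x \<Rightarrow> 'b \<Rightarrow> 'c \<Rightarrow> 'e \<Rightarrow> complex"
  assumes fX: "finite X" and fB: "finite B" and fC: "finite C" and fE: "finite E"
  and X0: "x0 \<in> X"
  and H1: "\<And>x y c c'. x\<in>X \<Longrightarrow> y\<in>X \<Longrightarrow> c\<in>C \<Longrightarrow> c'\<in>C \<Longrightarrow>
     (\<Sum>b\<in>B. \<Sum>e\<in>E. \<Psi> x b c e * cnj (\<Psi> y b c' e)) = (if x = y then \<tau> c c' else 0)"
  and H2: "\<And>x y e e'. x\<in>X \<Longrightarrow> y\<in>X \<Longrightarrow> e\<in>E \<Longrightarrow> e'\<in>E \<Longrightarrow>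
     (\<Sum>b\<in>B. \<Sum>c\<in>C. \<Psi> x b c e * cnj (\<Psi> y b c e')) = (if x = y then \<omega> e e' else 0)"
  and nz: "(\<Sum>e\<in>E. \<omega> e e) \<noteq> 0"
  shows "card X \<le> card B"
proof -
  define N where "N = real (card X)"
  define \<beta> where "\<beta> = real (card B)"
  define T where "T = (\<Sum>c\<in>C. \<Sum>c'\<in>C. (cmod (\<tau> c c'))^2)"
  define W where "W = (\<Sum>e\<in>E. \<Sum>e'\<in>E. (cmod (\<omega> e e'))^2)"
  have h1: "N * W \<le> \<beta> * T" unfolding N_def \<beta>_def T_def W_def
    by (rule half_core[OF fX fB fC fE, of \<Psi> \<tau> \<omega>]) (use H1 H2 in auto)
  have h2: "N * T \<le> \<beta> * W" unfolding N_def \<beta>_def T_def W_def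
    by (rule half_core[OF fX fB fE fC, of "\<lambda>x b e c. \<Psi> x b c e" \<omega> \<tau>])
       (use H1 H2 in auto)
  have W0: "0 < W" unfolding W_def by (rule pos_of_trace[where \<omega>=\<omega>, OF fE nz])
  have trace_eq: "(\<Sum>c\<in>C. \<tau> c c) = (\<Sum>e\<in>E. \<omega> e e)"
  proof -
    have "(\<Sum>c\<in>C. \<tau> c c) = (\<Sum>c\<in>C. \<Sum>b\<in>B. \<Sum>e\<in>E. \<Psi> x0 b c e * cnj (\<Psi> x0 b c e))"
      using H1[OF X0 X0] by simp
    also have "\<dots> = (\<Sum>e\<in>E. \<Sum>b\<in>B. \<Sum>c\<in>C. \<Psi> x0 b c e * cnj (\<Psi> x0 b c e))"
      by (subst sum.swap, subst (2) sum.swap, subst sum.swap, rule refl)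
    also have "\<dots> = (\<Sum>e\<in>E. \<omega> e e)"
      using H2[OF X0 X0] by simp
    finally show ?thesis .
  qed
  have T0: "0 < T" unfolding T_def by (rule pos_of_trace[OF fC]) (use nz trace_eq in simp)
  have "(N * W) * (N * T) \<le> (\<beta> * T) * (\<beta> * W)"
    by (rule mult_mono[OF h1 h2]) (use W0 T0 in \<open>auto simp: \<beta>_def N_def\<close>)
  hence "(N * N) * (W * T) \<le> (\<beta> * \<beta>) * (W * T)" by (simp add: algebra_simps)
  hence "N * N \<le> \<beta> * \<beta>" using W0 T0 by (simp add: mult_le_cancel_right)
  hence "N \<le> \<beta>" unfolding N_def \<beta>_def
    by (metis abs_of_nonneg abs_le_square_iff of_nat_0_le_iff power2_eq_square)
  thus ?thesis unfolding N_def \<beta>_def by simp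
qed

lemma sum_one:
  assumes "finite X" "x \<in> X" "\<And>a. a \<in> X \<Longrightarrow> a \<noteq> x \<Longrightarrow> f a = 0"
  shows "sum f X = f x"
proof -
  have "sum f X = f x + sum f (X - {x})" using assms by (simp add: sum.remove)
  also have "sum f (X - {x}) = 0" using assms by (intro sum.neutral) auto
  finally show ?thesis by simp
qed

lemma sum_two:
  assumes "finite X" "x \<in> X" "y \<in> X" "x \<noteq> y" "\<And>a. a \<in> X \<Longrightarrow> a \<noteq> x \<Longrightarrow> a \<noteq> y \<Longrightarrow> f a = 0"
  shows "sum f X = f x + f y"
proof -
  have "sum f X = f x + sum f (X - {x})" using assms by (simp add: sum.remove)
  also have "sum f (X - {x}) = f y" using assms by (intro sum_one) auto
  finally show ?thesis .
qed

lemma pure_density: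
  assumes "(\<Sum>a\<in>qbasis q R. \<phi> a * cnj (\<phi> a)) = 1"
  shows "is_density q R (\<lambda>a b. \<phi> a * cnj (\<phi> b))"
proof -
  have "Im Q = 0 \<and> Re Q \<ge> 0" if "Q = (\<Sum>x\<in>qbasis q R. \<Sum>y\<in>qbasis q R. cnj (v x) * (\<phi> x * cnj (\<phi> y)) * v y)" for v Q
  proof -
    define z where "z = (\<Sum>x\<in>qbasis q R. cnj (v x) * \<phi> x)"
    have "Q = z * cnj z" unfolding that z_def
      by (simp add: sum_distrib_left sum_distrib_right cnj_sum mult_ac) (rule sum.swap)
    also have "\<dots> = complex_of_real ((cmod z)^2)" by (rule complex_norm_square[symmetric])
    finally show ?thesis by simp
  qed
  then show ?thesis unfolding is_density_def Let_def using assms by simp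
qed

definition delta1 :: "'x \<Rightarrow> 'x \<Rightarrow> complex" where
  "delta1 x = (\<lambda>a. if a = x then 1 else 0)"

definition delta2 :: "'x \<Rightarrow> 'x \<Rightarrow> complex \<Rightarrow> complex \<Rightarrow> 'x \<Rightarrow> complex" where
  "delta2 x y \<alpha> \<beta> = (\<lambda>a. if a = x then \<alpha> else if a = y then \<beta> else 0)"

lemma delta1_sum: "finite X \<Longrightarrow> x \<in> X \<Longrightarrow> (\<Sum>a\<in>X. f a * delta1 x a) = f x"
  by (subst sum_one[of X x]) (auto simp: delta1_def)

lemma delta1_sum': "finite X \<Longrightarrow> x \<in> X \<Longrightarrow> (\<Sum>a\<in>X. f a * cnj (delta1 x a)) = f x"
  by (subst sum_one[of X x]) (auto simp: delta1_def)

lemma delta1_norm: "finite X \<Longrightarrow> x \<in> X \<Longrightarrow> (\<Sum>a\<in>X. delta1 x a * cnj (delta1 x a)) = 1"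
  by (subst sum_one[of X x]) (auto simp: delta1_def)

lemma delta2_sum: "finite X \<Longrightarrow> x \<in> X \<Longrightarrow> y \<in> X \<Longrightarrow> x \<noteq> y \<Longrightarrow>
   (\<Sum>a\<in>X. f a * delta2 x y \<alpha> \<beta> a) = f x * \<alpha> + f y * \<beta>"
  by (subst sum_two[of X x y]) (auto simp: delta2_def)

lemma delta2_sum': "finite X \<Longrightarrow> x \<in> X \<Longrightarrow> y \<in> X \<Longrightarrow> x \<noteq> y \<Longrightarrow>
   (\<Sum>a\<in>X. f a * cnj (delta2 x y \<alpha> \<beta> a)) = f x * cnj \<alpha> + f y * cnj \<beta>"
  by (subst sum_two[of X x y]) (auto simp: delta2_def)

lemma delta2_norm: "finite X \<Longrightarrow> x \<in> X \<Longrightarrow> y \<in> X \<Longrightarrow> x \<noteq> y \<Longrightarrow>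
   (\<Sum>a\<in>X. delta2 x y \<alpha> \<beta> a * cnj (delta2 x y \<alpha> \<beta> a)) = \<alpha> * cnj \<alpha> + \<beta> * cnj \<beta>"
  by (subst sum_two[of X x y]) (auto simp: delta2_def)

lemma delta2_x: "delta2 x y \<alpha> \<beta> x = \<alpha>" by (simp add: delta2_def)
lemma delta2_y: "x \<noteq> y \<Longrightarrow> delta2 x y \<alpha> \<beta> y = \<beta>" by (simp add: delta2_def)

definition hs :: complex where "hs = complex_of_real (sqrt (1/2))"
lemma hs_sq: "hs * cnj hs = 1/2"
proof -
  have "hs * cnj hs = complex_of_real (sqrt (1/2) * sqrt (1/2))" by (simp add: hs_def flip: of_real_mult)
  also have "sqrt (1/2) * sqrt (1/2) = (1/2::real)" by (simp add: real_sqrt_mult[symmetric])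
  finally show ?thesis by simp
qed
lemma hs_cnj: "cnj hs = hs" by (simp add: hs_def)

lemma indep_lemma:
  fixes G :: "'x \<Rightarrow> 'x \<Rightarrow> complex"
  assumes fX: "finite X"
  and hyp: "\<And>\<phi>. (\<Sum>a\<in>X. \<phi> a * cnj (\<phi> a)) = 1 \<Longrightarrow>
     (\<Sum>a\<in>X. \<Sum>b\<in>X. G a b * (\<phi> a * cnj (\<phi> b))) = \<kappa>"
  and x: "x \<in> X" and y: "y \<in> X"
  shows "G x y = (if x = y then \<kappa> else 0)"
proof -
  have diag: "G z z = \<kappa>" if z: "z \<in> X" for z
  proof -
    have "\<kappa> = (\<Sum>a\<in>X. \<Sum>b\<in>X. G a b * (delta1 z a * cnj (delta1 z b)))"
      by (rule hyp[symmetric], rule delta1_norm[OF fX z])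
    also have "\<dots> = (\<Sum>a\<in>X. (\<Sum>b\<in>X. G a b * cnj (delta1 z b)) * delta1 z a)"
      by (rule sum.cong[OF refl]) (simp add: sum_distrib_left sum_distrib_right mult_ac)
    also have "\<dots> = G z z" by (simp add: delta1_sum delta1_sum' fX z)
    finally show ?thesis by simp
  qed
  show ?thesis
  proof (cases "x = y")
    case True then show ?thesis using diag x by simp
  next
    case False
    have two: "(\<Sum>a\<in>X. \<Sum>b\<in>X. G a b * (delta2 x y \<alpha> \<beta> a * cnj (delta2 x y \<alpha> \<beta> b)))
       = G x x * \<alpha> * cnj \<alpha> + G x y * \<alpha> * cnj \<beta> + G y x * \<beta> * cnj \<alpha> + G y y * \<beta> * cnj \<beta>" for \<alpha> \<beta>
    proof -
      have "(\<Sum>a\<in>X. \<Sum>b\<in>X. G a b * (delta2 x y \<alpha> \<beta> a * cnj (delta2 x y \<alpha> \<beta> b)))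
        = (\<Sum>a\<in>X. (\<Sum>b\<in>X. G a b * cnj (delta2 x y \<alpha> \<beta> b)) * delta2 x y \<alpha> \<beta> a)"
        by (rule sum.cong[OF refl]) (simp add: sum_distrib_left sum_distrib_right mult_ac)
      also have "\<dots> = (G x x * cnj \<alpha> + G x y * cnj \<beta>) * \<alpha> + (G y x * cnj \<alpha> + G y y * cnj \<beta>) * \<beta>"
        by (simp add: delta2_sum delta2_sum' fX x y False)
      finally show ?thesis by (simp add: algebra_simps)
    qed
    have e1: "G x x * hs * cnj hs + G x y * hs * cnj hs + G y x * hs * cnj hs + G y y * hs * cnj hs = \<kappa>"
      using hyp[of "delta2 x y hs hs"] two[of hs hs] delta2_norm[OF fX x y False, of hs hs] hs_sq by simp
    have n2: "hs * cnj hs + \<i> * hs * cnj (\<i> * hs) = 1" using hs_sq by (simp add: algebra_simps)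
    have e2: "G x x * hs * cnj hs + G x y * hs * cnj (\<i> * hs) + G y x * (\<i> * hs) * cnj hs + G y y * (\<i> * hs) * cnj (\<i> * hs) = \<kappa>"
      using hyp[of "delta2 x y hs (\<i> * hs)"] two[of hs "\<i> * hs"] delta2_norm[OF fX x y False, of hs "\<i> * hs"] n2
      by simp
    have gx: "G x x = \<kappa>" "G y y = \<kappa>" using diag x y by auto
    have r1: "G x x * hs * cnj hs + G x y * hs * cnj hs + G y x * hs * cnj hs + G y y * hs * cnj hs
        = (G x x + G x y + G y x + G y y) * (hs * cnj hs)" by (simp add: algebra_simps)
    have r2: "G x x * hs * cnj hs + G x y * hs * cnj (\<i> * hs) + G y x * (\<i> * hs) * cnj hs + G y y * (\<i> * hs) * cnj (\<i> * hs)
        = (G x x - \<i> * G x y + \<i> * G y x + G y y) * (hs * cnj hs)" by (simp add: algebra_simps)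
    from e1 have "(G x x + G x y + G y x + G y y) / 2 = \<kappa>" unfolding r1 hs_sq by simp
    with gx have a1: "G x y + G y x = 0" by (simp add: field_simps)
    from e2 have "(G x x - \<i> * G x y + \<i> * G y x + G y y) / 2 = \<kappa>" unfolding r2 hs_sq by simp
    with gx have a2: "- \<i> * G x y + \<i> * G y x = 0" by (simp add: field_simps)
    from a1 have "G y x = - G x y" by (simp add: eq_neg_iff_add_eq_0 add.commute)
    with a2 have "- (2 * \<i>) * G x y = 0" by (simp add: algebra_simps)
    then have "G x y = 0" by simp
    then show ?thesis using False by simp
  qed
qed

lemma sum_cnj_zero:
  fixes z :: "'j \<Rightarrow> complex"
  assumes fJ: "finite J" and s: "(\<Sum>j\<in>J. z j * cnj (z j)) = 0" and j: "j \<in> J"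
  shows "z j = 0"
proof -
  have "complex_of_real (\<Sum>j\<in>J. (cmod (z j))^2) = 0"
    using s by (simp only: of_real_sum complex_norm_square)
  hence "(\<Sum>j\<in>J. (cmod (z j))^2) = 0" by (simp only: of_real_eq_0_iff)
  hence "\<forall>j\<in>J. (cmod (z j))^2 = 0" using fJ by (simp add: sum_nonneg_eq_0_iff)
  thus ?thesis using j by simp
qed

locale scal =
  fixes X :: "'x set" and J :: "'j set" and M :: "'j \<Rightarrow> 'x \<Rightarrow> 'x \<Rightarrow> complex"
  assumes fX: "finite X" and fJ: "finite J"
  and hyp: "\<And>\<phi> u u'. (\<Sum>a\<in>X. \<phi> a * cnj (\<phi> a)) = 1 \<Longrightarrow> u\<in>X \<Longrightarrow> u'\<in>X \<Longrightarrow>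
     (\<Sum>j\<in>J. (\<Sum>a\<in>X. M j u a * \<phi> a) * cnj (\<Sum>b\<in>X. M j u' b * \<phi> b)) = \<phi> u * cnj (\<phi> u')"
begin

lemma off: assumes "j\<in>J" "u\<in>X" "x\<in>X" "u\<noteq>x" shows "M j u x = 0"
proof -
  have "(\<Sum>j\<in>J. (\<Sum>a\<in>X. M j u a * delta1 x a) * cnj (\<Sum>b\<in>X. M j u b * delta1 x b)) = delta1 x u * cnj (delta1 x u)"
    by (rule hyp) (use delta1_norm[OF fX] assms in auto)
  hence "(\<Sum>j\<in>J. M j u x * cnj (M j u x)) = 0"
    using assms by (simp only: delta1_sum[OF fX assms(3)]) (simp add: delta1_def)
  thus ?thesis by (rule sum_cnj_zero[OF fJ _ assms(1)])
qed

lemma norm1: assumes "x\<in>X" shows "(\<Sum>j\<in>J. M j x x * cnj (M j x x)) = 1"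
proof -
  have "(\<Sum>j\<in>J. (\<Sum>a\<in>X. M j x a * delta1 x a) * cnj (\<Sum>b\<in>X. M j x b * delta1 x b)) = delta1 x x * cnj (delta1 x x)"
    by (rule hyp) (use delta1_norm[OF fX] assms in auto)
  thus ?thesis using assms by (simp only: delta1_sum[OF fX assms]) (simp add: delta1_def)
qed

lemma diag: assumes j: "j\<in>J" and x: "x\<in>X" and y: "y\<in>X" shows "M j x x = M j y y"
proof (cases "x = y")
  case True then show ?thesis by simp
next
  case False
  have nrm: "(\<Sum>a\<in>X. delta2 x y hs hs a * cnj (delta2 x y hs hs a)) = 1"
    by (subst delta2_norm[OF fX x y False]) (simp add: hs_sq)
  have "(\<Sum>j\<in>J. (\<Sum>a\<in>X. M j x a * delta2 x y hs hs a) * cnj (\<Sum>b\<in>X. M j y b * delta2 x y hs hs b))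
     = delta2 x y hs hs x * cnj (delta2 x y hs hs y)"
    by (rule hyp[OF nrm x y])
  moreover have "(\<Sum>a\<in>X. M j x a * delta2 x y hs hs a) = M j x x * hs" if "j \<in> J" for j
    using off[OF that x y False] by (simp add: delta2_sum fX x y False)
  moreover have "(\<Sum>a\<in>X. M j y a * delta2 x y hs hs a) = M j y y * hs" if "j \<in> J" for j
    using off[OF that y x] False by (simp add: delta2_sum fX x y False)
  ultimately have "(\<Sum>j\<in>J. (M j x x * hs) * cnj (M j y y * hs)) = hs * cnj hs"
    using False by (simp add: delta2_x delta2_y)
  moreover have "(\<Sum>j\<in>J. (M j x x * hs) * cnj (M j y y * hs)) = (\<Sum>j\<in>J. M j x x * cnj (M j y y)) * (hs * cnj hs)"
    by (simp add: sum_distrib_right sum_distrib_left mult_ac)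
  ultimately have "(\<Sum>j\<in>J. M j x x * cnj (M j y y)) * (hs * cnj hs) = hs * cnj hs"
    by simp
  hence "(\<Sum>j\<in>J. M j x x * cnj (M j y y)) * (1/2) = 1/2" by (simp only: hs_sq)
  hence ab: "(\<Sum>j\<in>J. M j x x * cnj (M j y y)) = 1" by simp
  hence ba: "(\<Sum>j\<in>J. M j y y * cnj (M j x x)) = 1"
    by (metis (no_types, lifting) cnj_sum complex_cnj_cnj complex_cnj_mult complex_cnj_one mult.commute sum.cong)
  have "(\<Sum>j\<in>J. (M j x x - M j y y) * cnj (M j x x - M j y y))
      = (\<Sum>j\<in>J. M j x x * cnj (M j x x)) - (\<Sum>j\<in>J. M j x x * cnj (M j y y))
        - (\<Sum>j\<in>J. M j y y * cnj (M j x x)) + (\<Sum>j\<in>J. M j y y * cnj (M j y y))"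
    by (simp add: algebra_simps sum.distrib sum_subtractf)
  also have "\<dots> = 0" using ab ba norm1[OF x] norm1[OF y] by simp
  finally have "M j x x - M j y y = 0" by (rule sum_cnj_zero[OF fJ _ j])
  thus ?thesis by simp
qed

end

lemma swap22: "(\<Sum>k\<in>K. \<Sum>u\<in>U. \<Sum>t\<in>T. \<Sum>t'\<in>T'. f k u t t') = (\<Sum>t\<in>T. \<Sum>t'\<in>T'. \<Sum>k\<in>K. \<Sum>u\<in>U. f k u t t')"
proof -
  have "(\<Sum>k\<in>K. \<Sum>u\<in>U. \<Sum>t\<in>T. \<Sum>t'\<in>T'. f k u t t') = (\<Sum>k\<in>K. \<Sum>t\<in>T. \<Sum>u\<in>U. \<Sum>t'\<in>T'. f k u t t')"
    by (intro sum.cong refl sum.swap)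
  also have "\<dots> = (\<Sum>t\<in>T. \<Sum>k\<in>K. \<Sum>u\<in>U. \<Sum>t'\<in>T'. f k u t t')" by (rule sum.swap)
  also have "\<dots> = (\<Sum>t\<in>T. \<Sum>k\<in>K. \<Sum>t'\<in>T'. \<Sum>u\<in>U. f k u t t')" by (intro sum.cong refl sum.swap)
  also have "\<dots> = (\<Sum>t\<in>T. \<Sum>t'\<in>T'. \<Sum>k\<in>K. \<Sum>u\<in>U. f k u t t')" by (intro sum.cong refl sum.swap)
  finally show ?thesis .
qed

lemma KL:
  fixes A :: "'e \<Rightarrow> 't \<Rightarrow> 'x \<Rightarrow> complex" and R :: "'k \<Rightarrow> 'x \<Rightarrow> 't \<Rightarrow> complex"
  assumes fX: "finite X" and fT: "finite Tb" and fK: "finite K"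
  and chan: "\<And>t t'. t\<in>Tb \<Longrightarrow> t'\<in>Tb \<Longrightarrow> (\<Sum>k\<in>K. \<Sum>u\<in>X. cnj (R k u t) * R k u t') = (if t = t' then 1 else 0)"
  and off: "\<And>k e u x. k\<in>K \<Longrightarrow> e\<in>E \<Longrightarrow> u\<in>X \<Longrightarrow> x\<in>X \<Longrightarrow> u\<noteq>x \<Longrightarrow> (\<Sum>t\<in>Tb. R k u t * A e t x) = 0"
  and diag: "\<And>k e x y. k\<in>K \<Longrightarrow> e\<in>E \<Longrightarrow> x\<in>X \<Longrightarrow> y\<in>X \<Longrightarrow> (\<Sum>t\<in>Tb. R k x t * A e t x) = (\<Sum>t\<in>Tb. R k y t * A e t y)"
  and x: "x \<in> X" and y: "y \<in> X" and e: "e \<in> E" and e': "e' \<in> E" and x0: "x0 \<in> X"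
  shows "(\<Sum>t\<in>Tb. A e t x * cnj (A e' t y)) = (if x = y then (\<Sum>k\<in>K. (\<Sum>t\<in>Tb. R k x0 t * A e t x0) * cnj (\<Sum>t\<in>Tb. R k x0 t * A e' t x0)) else 0)"
proof -
  define M where "M k e u x = (\<Sum>t\<in>Tb. R k u t * A e t x)" for k e u x
  have S1: "(\<Sum>k\<in>K. \<Sum>u\<in>X. M k e u x * cnj (M k e' u y)) = (\<Sum>t\<in>Tb. A e t x * cnj (A e' t y))"
  proof -
    have "(\<Sum>k\<in>K. \<Sum>u\<in>X. M k e u x * cnj (M k e' u y))
        = (\<Sum>k\<in>K. \<Sum>u\<in>X. \<Sum>t\<in>Tb. \<Sum>t'\<in>Tb. (A e t x * cnj (A e' t' y)) * (R k u t * cnj (R k u t')))"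
      unfolding M_def by (simp add: sum_distrib_left sum_distrib_right cnj_sum mult_ac)
        (rule sum.cong[OF refl], rule sum.cong[OF refl], rule sum.swap)
    also have "\<dots> = (\<Sum>t\<in>Tb. \<Sum>t'\<in>Tb. \<Sum>k\<in>K. \<Sum>u\<in>X. (A e t x * cnj (A e' t' y)) * (R k u t * cnj (R k u t')))"
      by (rule swap22)
    also have "\<dots> = (\<Sum>t\<in>Tb. \<Sum>t'\<in>Tb. (A e t x * cnj (A e' t' y)) * (if t = t' then 1 else 0))"
    proof (intro sum.cong refl)
      fix t t' assume tt: "t \<in> Tb" "t' \<in> Tb"
      have "(\<Sum>k\<in>K. \<Sum>u\<in>X. R k u t * cnj (R k u t')) = cnj (\<Sum>k\<in>K. \<Sum>u\<in>X. cnj (R k u t) * R k u t')"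
        by (simp add: cnj_sum mult.commute)
      also have "\<dots> = (if t = t' then 1 else 0)" using chan[OF tt] by simp
      finally show "(\<Sum>k\<in>K. \<Sum>u\<in>X. (A e t x * cnj (A e' t' y)) * (R k u t * cnj (R k u t')))
          = (A e t x * cnj (A e' t' y)) * (if t = t' then 1 else 0)"
        by (simp add: sum_distrib_left[symmetric])
    qed
    also have "\<dots> = (\<Sum>t\<in>Tb. A e t x * cnj (A e' t y))"
      using fT by (simp add: if_distrib cong: if_cong)
    finally show ?thesis .
  qed
  have S2: "(\<Sum>u\<in>X. M k e u x * cnj (M k e' u y)) = M k e x x * cnj (M k e' x y)" if k: "k \<in> K" for k
    by (rule sum_one[OF fX x]) (use off[OF k e _ x] M_def in auto)
  show ?thesis
  proof (cases "x = y")
    case False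
    have "M k e' x y = 0" if "k \<in> K" for k unfolding M_def using off[OF that e' x y False] .
    then show ?thesis using S1 S2 False by simp
  next
    case True
    have "M k e x x * cnj (M k e' x x) = M k e x0 x0 * cnj (M k e' x0 x0)" if "k \<in> K" for k
      unfolding M_def using diag[OF that e x x0] diag[OF that e' x x0] by simp
    then show ?thesis using S1 S2 True unfolding M_def by simp
  qed
qed

lemma comb:
  fixes h :: "nat \<Rightarrow> nat"
  assumes fA: "finite A" and cA: "card A = d" and zd: "z < d"
  and hyp: "\<And>Z. Z \<subseteq> A \<Longrightarrow> card Z = z \<Longrightarrow> m \<le> (\<Sum>j\<in>A - Z. h j)"
  shows "real d * real m / real (d - z) \<le> real (\<Sum>j\<in>A. h j)"
proof -
  define S where "S = {Z. Z \<subseteq> A \<and> card Z = z}"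
  have fS: "finite S" unfolding S_def
    by (rule finite_subset[of _ "Pow A"]) (use fA in auto)
  have cS: "card S = d choose z" unfolding S_def using n_subsets[OF fA] cA by simp
  have cSj: "card {Z\<in>S. j \<notin> Z} = (d - 1) choose z" if j: "j \<in> A" for j
  proof -
    have "{Z\<in>S. j \<notin> Z} = {Z. Z \<subseteq> A - {j} \<and> card Z = z}" unfolding S_def by auto
    moreover have "card (A - {j}) = d - 1" using cA j fA by simp
    ultimately show ?thesis using n_subsets[of "A - {j}" z] fA by simp
  qed
  have "(\<Sum>Z\<in>S. m) \<le> (\<Sum>Z\<in>S. \<Sum>j\<in>A - Z. h j)"
    by (rule sum_mono) (use hyp S_def in auto)
  also have "\<dots> = (\<Sum>Z\<in>S. \<Sum>j\<in>A. if j \<notin> Z then h j else 0)"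
    by (rule sum.cong[OF refl]) (use fA in \<open>simp add: sum.If_cases Int_absorb1 Diff_eq Compl_eq\<close>)
  also have "\<dots> = (\<Sum>j\<in>A. \<Sum>Z\<in>S. if j \<notin> Z then h j else 0)" by (rule sum.swap)
  also have "\<dots> = (\<Sum>j\<in>A. ((d - 1) choose z) * h j)"
  proof (rule sum.cong[OF refl])
    fix j assume j: "j \<in> A"
    have "(\<Sum>Z\<in>S. if j \<notin> Z then h j else 0) = (\<Sum>Z\<in>{Z\<in>S. j \<notin> Z}. h j)"
      by (rule sum.inter_filter[OF fS, symmetric])
    also have "\<dots> = ((d - 1) choose z) * h j" using cSj[OF j] by simp
    finally show "(\<Sum>Z\<in>S. if j \<notin> Z then h j else 0) = ((d - 1) choose z) * h j" .
  qed
  finally have ineq: "(d choose z) * m \<le> ((d - 1) choose z) * (\<Sum>j\<in>A. h j)"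
    by (simp add: cS sum_distrib_left)
  have "(d - z) * ((d choose z) * m) \<le> (d - z) * (((d - 1) choose z) * (\<Sum>j\<in>A. h j))"
    using ineq by (rule mult_left_mono) simp
  moreover have e1: "(d - z) * ((d choose z) * m) = ((d - 1) choose z) * (d * m)"
  proof -
    have "(d - z) * ((d choose z) * m) = ((d - z) * (d choose z)) * m" by (simp only: mult.assoc)
    also have "\<dots> = (d * ((d - 1) choose z)) * m" by (simp only: binomial_absorb_comp)
    finally show ?thesis by (simp add: algebra_simps)
  qed
  moreover have e2: "(d - z) * (((d - 1) choose z) * (\<Sum>j\<in>A. h j)) = ((d - 1) choose z) * ((d - z) * (\<Sum>j\<in>A. h j))"
    by (simp add: algebra_simps)
  ultimately have le2: "((d - 1) choose z) * (d * m) \<le> ((d - 1) choose z) * ((d - z) * (\<Sum>j\<in>A. h j))"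
    by (simp only: e1 e2)
  have "0 < (d - 1) choose z" using zd by simp
  with le2 have "d * m \<le> (d - z) * (\<Sum>j\<in>A. h j)" by (simp add: mult_le_cancel_left)
  hence "real d * real m \<le> real (d - z) * real (\<Sum>j\<in>A. h j)"
    by (metis of_nat_le_iff of_nat_mult)
  moreover have "0 < real (d - z)" using zd by simp
  ultimately show ?thesis by (simp add: divide_le_eq mult.commute)
qed

lemma merge_in:
  assumes "u \<in> qbasis q U" "v \<in> qbasis q V"
  shows "merge_basis U u v \<in> qbasis q (U \<union> V)"
  using assms unfolding qbasis_def merge_basis_def PiE_def Pi_def extensional_def by auto

lemma restrict_in: "w \<in> qbasis q W \<Longrightarrow> U \<subseteq> W \<Longrightarrow> restrict w U \<in> qbasis q U"
  unfolding qbasis_def by auto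

lemma split_sum:
  assumes disj: "U \<inter> V = {}"
  shows "(\<Sum>w\<in>qbasis q (U \<union> V). h w) = (\<Sum>u\<in>qbasis q U. \<Sum>v\<in>qbasis q V. h (merge_basis U u v))"
proof -
  have "(\<Sum>u\<in>qbasis q U. \<Sum>v\<in>qbasis q V. h (merge_basis U u v))
      = (\<Sum>p\<in>qbasis q U \<times> qbasis q V. h (merge_basis U (fst p) (snd p)))"
    by (simp add: sum.cartesian_product case_prod_beta)
  also have "\<dots> = (\<Sum>w\<in>qbasis q (U \<union> V). h w)"
  proof (rule sum.reindex_bij_witness[where i = "\<lambda>w. (restrict w U, restrict w V)"
        and j = "\<lambda>p. merge_basis U (fst p) (snd p)"])
    fix w assume w: "w \<in> qbasis q (U \<union> V)"
    show "(restrict w U, restrict w V) \<in> qbasis q U \<times> qbasis q V"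
      using w by (auto intro: restrict_in)
    show "merge_basis U (fst (restrict w U, restrict w V)) (snd (restrict w U, restrict w V)) = w"
      using w unfolding merge_basis_def qbasis_def
      by (auto simp: fun_eq_iff PiE_def extensional_def)
  next
    fix p assume p: "p \<in> qbasis q U \<times> qbasis q V"
    show "merge_basis U (fst p) (snd p) \<in> qbasis q (U \<union> V)"
      using p merge_in by (metis mem_Times_iff)
    show "(restrict (merge_basis U (fst p) (snd p)) U, restrict (merge_basis U (fst p) (snd p)) V) = p"
      using p disj unfolding merge_basis_def qbasis_def
      by (cases p) (auto simp: fun_eq_iff PiE_def extensional_def)
  qed simp
  finally show ?thesis by simp
qed

lemma finite_qbasis: "finite R \<Longrightarrow> finite (qbasis q R)"
  unfolding qbasis_def by (simp add: finite_PiE)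

lemma card_qbasis: "finite R \<Longrightarrow> card (qbasis q R) = q ^ card R"
  unfolding qbasis_def by (simp add: card_PiE)

lemma qbasis_ne: "0 < q \<Longrightarrow> restrict (\<lambda>_. 0) R \<in> qbasis q R"
  unfolding qbasis_def by auto

lemma sum_list_idx: "(\<Sum>K\<leftarrow>Ks. f K) = (\<Sum>i\<in>{..<length Ks}. f (Ks ! i))"
  by (simp add: sum_list_sum_nth atLeast0LessThan)

lemma swap24: "(\<Sum>t\<in>T1. \<Sum>t'\<in>T2. \<Sum>w\<in>W. \<Sum>i\<in>I. \<Sum>a\<in>X. \<Sum>b\<in>Y. f t t' w i a b)
   = (\<Sum>w\<in>W. \<Sum>i\<in>I. \<Sum>a\<in>X. \<Sum>b\<in>Y. \<Sum>t\<in>T1. \<Sum>t'\<in>T2. f t t' w i a b)"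
proof -
  have "(\<Sum>t\<in>T1. \<Sum>t'\<in>T2. \<Sum>w\<in>W. \<Sum>i\<in>I. \<Sum>a\<in>X. \<Sum>b\<in>Y. f t t' w i a b)
      = (\<Sum>t\<in>T1. \<Sum>w\<in>W. \<Sum>i\<in>I. \<Sum>a\<in>X. \<Sum>b\<in>Y. \<Sum>t'\<in>T2. f t t' w i a b)"
    by (intro sum.cong refl) (rule pull4[symmetric])
  also have "\<dots> = (\<Sum>w\<in>W. \<Sum>i\<in>I. \<Sum>a\<in>X. \<Sum>b\<in>Y. \<Sum>t\<in>T1. \<Sum>t'\<in>T2. f t t' w i a b)"
    by (rule pull4[symmetric])
  finally show ?thesis .
qed

lemma R1_step:
  fixes R :: "'t \<Rightarrow> complex" and R' :: "'t \<Rightarrow> complex" and K :: "'i \<Rightarrow> 't \<Rightarrow> 'w \<Rightarrow> 'x \<Rightarrow> complex"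
  shows "(\<Sum>t\<in>Tb. \<Sum>t'\<in>Tb. R t * (\<Sum>w\<in>W. \<Sum>i\<in>I. \<Sum>a\<in>X. \<Sum>b\<in>X. K i t w a * (\<phi> a * cnj (\<phi> b)) * cnj (K i t' w b)) * cnj (R' t'))
    = (\<Sum>w\<in>W. \<Sum>i\<in>I. (\<Sum>a\<in>X. (\<Sum>t\<in>Tb. R t * K i t w a) * \<phi> a) * cnj (\<Sum>b\<in>X. (\<Sum>t\<in>Tb. R' t * K i t w b) * \<phi> b))"
proof -
  have "(\<Sum>t\<in>Tb. \<Sum>t'\<in>Tb. R t * (\<Sum>w\<in>W. \<Sum>i\<in>I. \<Sum>a\<in>X. \<Sum>b\<in>X. K i t w a * (\<phi> a * cnj (\<phi> b)) * cnj (K i t' w b)) * cnj (R' t'))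
    = (\<Sum>t\<in>Tb. \<Sum>t'\<in>Tb. \<Sum>w\<in>W. \<Sum>i\<in>I. \<Sum>a\<in>X. \<Sum>b\<in>X. (R t * K i t w a * \<phi> a) * cnj (R' t' * K i t' w b * \<phi> b))"
    by (simp add: sum_distrib_left sum_distrib_right mult_ac)
  also have "\<dots> = (\<Sum>w\<in>W. \<Sum>i\<in>I. \<Sum>a\<in>X. \<Sum>b\<in>X. \<Sum>t\<in>Tb. \<Sum>t'\<in>Tb. (R t * K i t w a * \<phi> a) * cnj (R' t' * K i t' w b * \<phi> b))"
    by (rule swap24)
  also have "\<dots> = (\<Sum>w\<in>W. \<Sum>i\<in>I. \<Sum>b\<in>X. \<Sum>a\<in>X. \<Sum>t\<in>Tb. \<Sum>t'\<in>Tb. (R t * K i t w a * \<phi> a) * cnj (R' t' * K i t' w b * \<phi> b))"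
    by (rule sum.cong[OF refl], rule sum.cong[OF refl], rule sum.swap)
  also have "\<dots> = (\<Sum>w\<in>W. \<Sum>i\<in>I. \<Sum>b\<in>X. \<Sum>a\<in>X. \<Sum>t'\<in>Tb. \<Sum>t\<in>Tb. (R t * K i t w a * \<phi> a) * cnj (R' t' * K i t' w b * \<phi> b))"
    by (rule sum.cong[OF refl], rule sum.cong[OF refl], rule sum.cong[OF refl], rule sum.cong[OF refl], rule sum.swap)
  also have "\<dots> = (\<Sum>w\<in>W. \<Sum>i\<in>I. (\<Sum>a\<in>X. (\<Sum>t\<in>Tb. R t * K i t w a) * \<phi> a) * cnj (\<Sum>b\<in>X. (\<Sum>t\<in>Tb. R' t * K i t w b) * \<phi> b))"
    by (simp add: sum_distrib_left sum_distrib_right cnj_sum sum_product mult_ac)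
  finally show ?thesis .
qed

lemma sum_prod2: "(\<Sum>j\<in>A \<times> B. f j) = (\<Sum>a\<in>A. \<Sum>b\<in>B. f (a, b))"
  by (simp add: sum.cartesian_product)

lemma merge_eq: "merge_basis S (merge_basis (T \<inter> S) c g) (merge_basis (T - S) b f)
   = merge_basis T (merge_basis (T - S) b c) (merge_basis (S - T) g f)"
  by (auto simp: merge_basis_def fun_eq_iff)

lemma U_step: "(\<Sum>w\<in>W. \<Sum>i\<in>I. \<Sum>a\<in>X. \<Sum>b\<in>X. K i w a * \<rho> a b * cnj (K' i w b))
   = (\<Sum>a\<in>X. \<Sum>b\<in>X. (\<Sum>w\<in>W. \<Sum>i\<in>I. K i w a * cnj (K' i w b)) * \<rho> a b)"
proof -
  have "(\<Sum>w\<in>W. \<Sum>i\<in>I. \<Sum>a\<in>X. \<Sum>b\<in>X. K i w a * \<rho> a b * cnj (K' i w b))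
     = (\<Sum>a\<in>X. \<Sum>b\<in>X. \<Sum>w\<in>W. \<Sum>i\<in>I. K i w a * \<rho> a b * cnj (K' i w b))"
    by (rule swap22)
  also have "\<dots> = (\<Sum>a\<in>X. \<Sum>b\<in>X. (\<Sum>w\<in>W. \<Sum>i\<in>I. K i w a * cnj (K' i w b)) * \<rho> a b)"
    by (simp add: sum_distrib_right sum_distrib_left mult_ac)
  finally show ?thesis .
qed

theorem key:
  fixes Es :: "(nat, nat \<times> nat) qop list" and T :: "(nat \<times> nat) set"
  assumes q2: "q \<ge> 2"
  and rec: "recoverable_from q n m s Es T"
  and unauth: "unauthorized q n m s Es Z"
  and TL: "T \<subseteq> share_reg s (parties n)" and ZP: "Z \<subseteq> parties n"
  shows "m \<le> card (T - share_reg s Z)"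
proof -
  define L where "L = share_reg s (parties n)"
  define X where "X = qbasis q (secret_reg m)"
  define sZ where "sZ = share_reg s Z"
  define I where "I = {..<length Es}"
  have fL: "finite L" unfolding L_def share_reg_def parties_def by auto
  have fX: "finite X" unfolding X_def secret_reg_def by (simp add: finite_qbasis)
  have sZL: "sZ \<subseteq> L" unfolding sZ_def L_def share_reg_def using ZP by auto
  have TL': "T \<subseteq> L" using TL L_def by simp
  have fT: "finite T" using TL' fL finite_subset by blast
  have fsZ: "finite sZ" using sZL fL finite_subset by blast
  have fI: "finite I" unfolding I_def by simp
  define x0 where "x0 = restrict (\<lambda>_. 0::nat) (secret_reg m)"
  have x0: "x0 \<in> X" unfolding x0_def X_def using q2 by (intro qbasis_ne) simp
  obtain D where chD: "is_channel q T (secret_reg m) D" and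
    recD: "\<And>\<rho>. is_density q (secret_reg m) \<rho> \<Longrightarrow> op_eq q (secret_reg m)
       (apply_channel q T (secret_reg m) D (ptrace q L T (apply_channel q (secret_reg m) L Es \<rho>))) \<rho>"
    using rec unfolding recoverable_from_def L_def by blast
  define Kd where "Kd = {..<length D}"
  have fKd: "finite Kd" unfolding Kd_def by simp
  define E where "E = qbasis q (L - T) \<times> I"
  have fE: "finite E" unfolding E_def using fL fI by (simp add: finite_qbasis)
  define J where "J = Kd \<times> E"
  have fJ: "finite J" unfolding J_def using fKd fE by simp
  define A where "A e t x = (Es ! snd e) (merge_basis T t (fst e)) x" for e t x
  define M where "M j u a = (\<Sum>t\<in>qbasis q T. (D ! fst j) u t * A (snd j) t a)" for j u a
  have scalM: "scal X J M"
  proof (unfold_locales)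
    show "finite X" "finite J" using fX fJ .
    fix \<phi> u u' assume n\<phi>: "(\<Sum>a\<in>X. \<phi> a * cnj (\<phi> a)) = 1" and u: "u \<in> X" and u': "u' \<in> X"
    have dens: "is_density q (secret_reg m) (\<lambda>a b. \<phi> a * cnj (\<phi> b))"
      using pure_density n\<phi> unfolding X_def by blast
    have "apply_channel q T (secret_reg m) D (ptrace q L T (apply_channel q (secret_reg m) L Es (\<lambda>a b. \<phi> a * cnj (\<phi> b)))) u u' = \<phi> u * cnj (\<phi> u')"
      using recD[OF dens] u u' unfolding op_eq_def X_def by auto
    moreover have "apply_channel q T (secret_reg m) D (ptrace q L T (apply_channel q (secret_reg m) L Es (\<lambda>a b. \<phi> a * cnj (\<phi> b)))) u u'
       = (\<Sum>j\<in>J. (\<Sum>a\<in>X. M j u a * \<phi> a) * cnj (\<Sum>b\<in>X. M j u' b * \<phi> b))"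
    proof -
      have "apply_channel q T (secret_reg m) D (ptrace q L T (apply_channel q (secret_reg m) L Es (\<lambda>a b. \<phi> a * cnj (\<phi> b)))) u u'
        = (\<Sum>k\<in>Kd. \<Sum>t\<in>qbasis q T. \<Sum>t'\<in>qbasis q T. (D!k) u t * (\<Sum>w\<in>qbasis q (L - T). \<Sum>i\<in>I. \<Sum>a\<in>X. \<Sum>b\<in>X.
             (Es!i) (merge_basis T t w) a * (\<phi> a * cnj (\<phi> b)) * cnj ((Es!i) (merge_basis T t' w) b)) * cnj ((D!k) u' t'))"
        unfolding apply_channel_def ptrace_def sum_list_idx Kd_def I_def X_def by simp
      also have "\<dots> = (\<Sum>k\<in>Kd. \<Sum>w\<in>qbasis q (L - T). \<Sum>i\<in>I. (\<Sum>a\<in>X. (\<Sum>t\<in>qbasis q T. (D!k) u t * (Es!i) (merge_basis T t w) a) * \<phi> a)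
             * cnj (\<Sum>b\<in>X. (\<Sum>t\<in>qbasis q T. (D!k) u' t * (Es!i) (merge_basis T t w) b) * \<phi> b))"
        by (rule sum.cong[OF refl], rule R1_step)
      also have "\<dots> = (\<Sum>j\<in>J. (\<Sum>a\<in>X. M j u a * \<phi> a) * cnj (\<Sum>b\<in>X. M j u' b * \<phi> b))"
        unfolding J_def E_def sum_prod2 M_def A_def by simp
      finally show ?thesis .
    qed
    ultimately show "(\<Sum>j\<in>J. (\<Sum>a\<in>X. M j u a * \<phi> a) * cnj (\<Sum>b\<in>X. M j u' b * \<phi> b)) = \<phi> u * cnj (\<phi> u')"
      by simp
  qed

  have chan: "\<And>t t'. t\<in>qbasis q T \<Longrightarrow> t'\<in>qbasis q T \<Longrightarrow>
      (\<Sum>k\<in>Kd. \<Sum>u\<in>X. cnj ((D!k) u t) * (D!k) u t') = (if t = t' then 1 else 0)"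
    using chD unfolding is_channel_def sum_list_idx Kd_def X_def by simp
  have offM: "(\<Sum>t\<in>qbasis q T. (D!k) u t * A e t x) = 0"
    if "k\<in>Kd" "e\<in>E" "u\<in>X" "x\<in>X" "u\<noteq>x" for k e u x
    using scal.off[OF scalM, of "(k,e)" u x] that unfolding J_def M_def by simp
  have diagM: "(\<Sum>t\<in>qbasis q T. (D!k) x t * A e t x) = (\<Sum>t\<in>qbasis q T. (D!k) y t * A e t y)"
    if "k\<in>Kd" "e\<in>E" "x\<in>X" "y\<in>X" for k e x y
    using scal.diag[OF scalM, of "(k,e)" x y] that unfolding J_def M_def by simp
  define \<omega>0 where "\<omega>0 e e' = (\<Sum>k\<in>Kd. M (k,e) x0 x0 * cnj (M (k,e') x0 x0))" for e e'
  have KLres: "(\<Sum>t\<in>qbasis q T. A e t x * cnj (A e' t y)) = (if x = y then \<omega>0 e e' else 0)"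
    if "x\<in>X" "y\<in>X" "e\<in>E" "e'\<in>E" for x y e e'
  proof -
    have fTb: "finite (qbasis q T)" using fT by (simp add: finite_qbasis)
    show ?thesis
      using KL[where R="\<lambda>k. D ! k" and A=A and E=E, OF fX fTb fKd chan offM diagM that x0]
      unfolding \<omega>0_def M_def by simp
  qed
  have trace1: "(\<Sum>e\<in>E. \<omega>0 e e) = 1"
  proof -
    have "(\<Sum>e\<in>E. \<omega>0 e e) = (\<Sum>k\<in>Kd. \<Sum>e\<in>E. M (k,e) x0 x0 * cnj (M (k,e) x0 x0))"
      unfolding \<omega>0_def by (rule sum.swap)
    also have "\<dots> = (\<Sum>j\<in>J. M j x0 x0 * cnj (M j x0 x0))" unfolding J_def sum_prod2 ..
    also have "\<dots> = 1" by (rule scal.norm1[OF scalM x0])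
    finally show ?thesis .
  qed
  define Gz where "Gz u u' a b = (\<Sum>w\<in>qbasis q (L - sZ). \<Sum>i\<in>I. (Es!i) (merge_basis sZ u w) a * cnj ((Es!i) (merge_basis sZ u' w) b))" for u u' a b
  have ptr: "ptrace q L sZ (apply_channel q (secret_reg m) L Es \<rho>) u u' = (\<Sum>a\<in>X. \<Sum>b\<in>X. Gz u u' a b * \<rho> a b)" for \<rho> u u'
    unfolding ptrace_def apply_channel_def sum_list_idx Gz_def I_def X_def by (rule U_step)
  have Gz_val: "Gz u u' x y = (if x = y then Gz u u' x0 x0 else 0)"
    if u: "u\<in>qbasis q sZ" and u': "u'\<in>qbasis q sZ" and x: "x\<in>X" and y: "y\<in>X" for u u' x y
  proof -
    define \<kappa> where "\<kappa> = (\<Sum>a\<in>X. \<Sum>b\<in>X. Gz u u' a b * (delta1 x0 a * cnj (delta1 x0 b)))"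
    have dens0: "is_density q (secret_reg m) (\<lambda>a b. delta1 x0 a * cnj (delta1 x0 b))"
      using pure_density delta1_norm[OF fX x0] unfolding X_def by blast
    have hyp: "(\<Sum>a\<in>X. \<Sum>b\<in>X. Gz u u' a b * (\<phi> a * cnj (\<phi> b))) = \<kappa>"
      if n\<phi>: "(\<Sum>a\<in>X. \<phi> a * cnj (\<phi> a)) = 1" for \<phi>
    proof -
      have dens: "is_density q (secret_reg m) (\<lambda>a b. \<phi> a * cnj (\<phi> b))"
        using pure_density n\<phi> unfolding X_def by blast
      have "ptrace q L sZ (apply_channel q (secret_reg m) L Es (\<lambda>a b. \<phi> a * cnj (\<phi> b))) u u'
          = ptrace q L sZ (apply_channel q (secret_reg m) L Es (\<lambda>a b. delta1 x0 a * cnj (delta1 x0 b))) u u'"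
        using unauth dens dens0 u u' unfolding unauthorized_def op_eq_def L_def sZ_def by blast
      thus ?thesis unfolding ptr \<kappa>_def .
    qed
    have "Gz u u' x y = (if x = y then \<kappa> else 0)" by (rule indep_lemma[OF fX hyp x y])
    moreover have "Gz u u' x0 x0 = \<kappa>" using indep_lemma[OF fX hyp x0 x0] by simp
    ultimately show ?thesis by simp
  qed
  define Bl where "Bl = T - sZ"
  define Cl where "Cl = T \<inter> sZ"
  define G where "G = sZ - T"
  define F where "F = L - T - sZ"
  have fBl: "finite Bl" "finite Cl" "finite G" "finite F" unfolding Bl_def Cl_def G_def F_def
    using fT fsZ fL by auto
  define B where "B = qbasis q Bl"
  define C where "C = qbasis q Cl \<times> qbasis q G"
  define E' where "E' = qbasis q F \<times> I"
  have fB: "finite B" "finite C" "finite E'" unfolding B_def C_def E'_def using fBl fI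
    by (auto simp: finite_qbasis)
  define \<Psi> where "\<Psi> x b cg fi = (Es ! snd fi) (merge_basis T (merge_basis Bl b (fst cg)) (merge_basis G (snd cg) (fst fi))) x"
    for x b cg fi
  define \<tau> where "\<tau> cg cg' = Gz (merge_basis Cl (fst cg) (snd cg)) (merge_basis Cl (fst cg') (snd cg')) x0 x0" for cg cg'
  define \<omega> where "\<omega> fi fi' = (\<Sum>g\<in>qbasis q G. \<omega>0 (merge_basis G g (fst fi), snd fi) (merge_basis G g (fst fi'), snd fi'))" for fi fi'
  have set1: "L - sZ = Bl \<union> F" "Bl \<inter> F = {}" unfolding Bl_def F_def using TL' by auto
  have set2: "Cl \<union> G = sZ" "Cl \<inter> G = {}" unfolding Cl_def G_def by auto
  have set3: "Bl \<union> Cl = T" "Bl \<inter> Cl = {}" unfolding Bl_def Cl_def by auto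
  have set4: "G \<union> F = L - T" "G \<inter> F = {}" unfolding G_def F_def using sZL by auto
  have H1: "(\<Sum>b\<in>B. \<Sum>fi\<in>E'. \<Psi> x b cg fi * cnj (\<Psi> y b cg' fi)) = (if x = y then \<tau> cg cg' else 0)"
    if x: "x\<in>X" and y: "y\<in>X" and cg: "cg\<in>C" and cg': "cg'\<in>C" for x y cg cg'
  proof -
    obtain c g where cgp: "cg = (c,g)" "c \<in> qbasis q Cl" "g \<in> qbasis q G" using cg unfolding C_def by auto
    obtain c' g' where cgp': "cg' = (c',g')" "c' \<in> qbasis q Cl" "g' \<in> qbasis q G" using cg' unfolding C_def by auto
    have u: "merge_basis Cl c g \<in> qbasis q sZ" using merge_in[OF cgp(2,3)] set2 by simp
    have u': "merge_basis Cl c' g' \<in> qbasis q sZ" using merge_in[OF cgp'(2,3)] set2 by simp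
    have "Gz (merge_basis Cl c g) (merge_basis Cl c' g') x y
       = (\<Sum>b\<in>B. \<Sum>f\<in>qbasis q F. \<Sum>i\<in>I. (Es!i) (merge_basis sZ (merge_basis Cl c g) (merge_basis Bl b f)) x
            * cnj ((Es!i) (merge_basis sZ (merge_basis Cl c' g') (merge_basis Bl b f)) y))"
      unfolding Gz_def set1(1) split_sum[OF set1(2)] B_def ..
    also have "\<dots> = (\<Sum>b\<in>B. \<Sum>fi\<in>E'. \<Psi> x b cg fi * cnj (\<Psi> y b cg' fi))"
      unfolding E'_def sum_prod2 \<Psi>_def cgp(1) cgp'(1) Cl_def Bl_def G_def merge_eq by simp
    finally have eq: "Gz (merge_basis Cl c g) (merge_basis Cl c' g') x y = (\<Sum>b\<in>B. \<Sum>fi\<in>E'. \<Psi> x b cg fi * cnj (\<Psi> y b cg' fi))" .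
    show ?thesis using Gz_val[OF u u' x y] unfolding eq \<tau>_def cgp(1) cgp'(1) fst_conv snd_conv .
  qed
  have H2: "(\<Sum>b\<in>B. \<Sum>cg\<in>C. \<Psi> x b cg fi * cnj (\<Psi> y b cg fi')) = (if x = y then \<omega> fi fi' else 0)"
    if x: "x\<in>X" and y: "y\<in>X" and fi: "fi\<in>E'" and fi': "fi'\<in>E'" for x y fi fi'
  proof -
    obtain f i where fip: "fi = (f,i)" "f \<in> qbasis q F" "i \<in> I" using fi unfolding E'_def by auto
    obtain f' i' where fip': "fi' = (f',i')" "f' \<in> qbasis q F" "i' \<in> I" using fi' unfolding E'_def by auto
    have "(\<Sum>b\<in>B. \<Sum>cg\<in>C. \<Psi> x b cg fi * cnj (\<Psi> y b cg fi'))
       = (\<Sum>b\<in>B. \<Sum>c\<in>qbasis q Cl. \<Sum>g\<in>qbasis q G. \<Psi> x b (c,g) fi * cnj (\<Psi> y b (c,g) fi'))"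
      unfolding C_def sum_prod2 ..
    also have "\<dots> = (\<Sum>b\<in>B. \<Sum>g\<in>qbasis q G. \<Sum>c\<in>qbasis q Cl. \<Psi> x b (c,g) fi * cnj (\<Psi> y b (c,g) fi'))"
      by (rule sum.cong[OF refl], rule sum.swap)
    also have "\<dots> = (\<Sum>g\<in>qbasis q G. \<Sum>b\<in>B. \<Sum>c\<in>qbasis q Cl. \<Psi> x b (c,g) fi * cnj (\<Psi> y b (c,g) fi'))"
      by (rule sum.swap)
    also have "\<dots> = (\<Sum>g\<in>qbasis q G. \<Sum>t\<in>qbasis q T. A (merge_basis G g f, i) t x * cnj (A (merge_basis G g f', i') t y))"
      unfolding set3(1)[symmetric] split_sum[OF set3(2)] B_def \<Psi>_def A_def fip(1) fip'(1) by simp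
    also have "\<dots> = (\<Sum>g\<in>qbasis q G. if x = y then \<omega>0 (merge_basis G g f, i) (merge_basis G g f', i') else 0)"
    proof (rule sum.cong[OF refl])
      fix g assume g: "g \<in> qbasis q G"
      have e1: "(merge_basis G g f, i) \<in> E" unfolding E_def using merge_in[OF g fip(2)] set4 fip(3) by simp
      have e2: "(merge_basis G g f', i') \<in> E" unfolding E_def using merge_in[OF g fip'(2)] set4 fip'(3) by simp
      show "(\<Sum>t\<in>qbasis q T. A (merge_basis G g f, i) t x * cnj (A (merge_basis G g f', i') t y))
          = (if x = y then \<omega>0 (merge_basis G g f, i) (merge_basis G g f', i') else 0)"
        by (rule KLres[OF x y e1 e2])
    qed
    also have "\<dots> = (if x = y then \<omega> fi fi' else 0)" unfolding \<omega>_def fip(1) fip'(1) by simp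
    finally show ?thesis .
  qed
  have nz: "(\<Sum>fi\<in>E'. \<omega> fi fi) \<noteq> 0"
  proof -
    have "(\<Sum>fi\<in>E'. \<omega> fi fi) = (\<Sum>f\<in>qbasis q F. \<Sum>i\<in>I. \<Sum>g\<in>qbasis q G. \<omega>0 (merge_basis G g f, i) (merge_basis G g f, i))"
      unfolding E'_def sum_prod2 \<omega>_def by simp
    also have "\<dots> = (\<Sum>g\<in>qbasis q G. \<Sum>f\<in>qbasis q F. \<Sum>i\<in>I. \<omega>0 (merge_basis G g f, i) (merge_basis G g f, i))"
      by (subst sum.swap, rule sum.cong[OF refl], rule sum.swap)
    also have "\<dots> = (\<Sum>e\<in>E. \<omega>0 e e)"
      unfolding E_def sum_prod2 set4(1)[symmetric] split_sum[OF set4(2)] ..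
    also have "\<dots> = 1" by (rule trace1)
    finally show ?thesis by simp
  qed
  have "card X \<le> card B" by (rule core[OF fX fB x0 H1 H2 nz])
  hence "q ^ m \<le> q ^ card Bl" unfolding X_def B_def secret_reg_def
    using fBl by (simp add: card_qbasis)
  hence "m \<le> card Bl" using q2 by (simp add: power_le_imp_le_exp)
  thus ?thesis unfolding Bl_def sZ_def .
qed

theorem corollary3:
  fixes q t n z d m :: nat and s :: "nat \<Rightarrow> nat"
    and E :: "(nat, nat \<times> nat) qop list"
    and H :: "nat set \<Rightarrow> (nat \<times> nat) set"
  assumes "q \<ge> 2"
    and "z < t" and "t \<le> d" and "d \<le> n"
    and "is_QSS q t n z m s E"
    and "is_comm_protocol q n m s E H"
  shows "real (CC n H d) \<ge> real d * real m / real (d - z)"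
proof -
  note q2 = assms(1)
  have authP: "\<And>P. P \<subseteq> parties n \<Longrightarrow> card P \<ge> t \<Longrightarrow> authorized q n m s E P"
    and unauthP: "\<And>P. P \<subseteq> parties n \<Longrightarrow> card P \<le> z \<Longrightarrow> unauthorized q n m s E P"
    using assms(5) unfolding is_QSS_def by auto
  have cardP: "card (parties n) = n" unfolding parties_def by simp
  have fP: "finite (parties n)" unfolding parties_def by simp
  obtain A where AP: "A \<subseteq> parties n" and cA: "card A = d" and fA: "finite A"
    using obtain_subset_with_card_n[of d "parties n"] assms(4) cardP by auto
  have authA: "authorized q n m s E A" using authP[OF AP] cA assms(3) by simp
  have HA: "H A \<subseteq> share_reg s A" and recA: "recoverable_from q n m s E (H A)"
    using assms(6) AP authA unfolding is_comm_protocol_def by auto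
  have HL: "H A \<subseteq> share_reg s (parties n)" using HA AP unfolding share_reg_def by auto
  have keyZ: "m \<le> (\<Sum>j\<in>A - Z. h_sent H j A)" if ZA: "Z \<subseteq> A" and cZ: "card Z = z" for Z
  proof -
    have ZP: "Z \<subseteq> parties n" using ZA AP by auto
    have un: "unauthorized q n m s E Z" using unauthP[OF ZP] cZ by simp
    have "m \<le> card (H A - share_reg s Z)" by (rule key[OF q2 recA un HL ZP])
    also have "H A - share_reg s Z = Sigma (A - Z) (\<lambda>j. {l. (j, l) \<in> H A})"
      using HA unfolding share_reg_def by auto
    also have "card \<dots> = (\<Sum>j\<in>A - Z. card {l. (j, l) \<in> H A})"
    proof (rule card_SigmaI)
      show "finite (A - Z)" using fA by simp
      show "\<forall>a\<in>A - Z. finite {l. (a, l) \<in> H A}"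
      proof
        fix a assume "a \<in> A - Z"
        have "{l. (a, l) \<in> H A} \<subseteq> {..<s a}" using HA unfolding share_reg_def by auto
        thus "finite {l. (a, l) \<in> H A}" using finite_subset by blast
      qed
    qed
    finally show ?thesis unfolding h_sent_def .
  qed
  have "real d * real m / real (d - z) \<le> real (\<Sum>j\<in>A. h_sent H j A)"
    by (rule comb[OF fA cA _ keyZ]) (use assms(2,3) in auto)
  also have "(\<Sum>j\<in>A. h_sent H j A) = CC_set H A" unfolding CC_set_def ..
  also have "CC_set H A \<le> CC n H d"
  proof -
    have fin: "finite {CC_set H A | A. A \<subseteq> parties n \<and> card A = d}"
    proof -
      have "finite {A. A \<subseteq> parties n \<and> card A = d}"
        by (rule finite_subset[of _ "Pow (parties n)"]) (use fP in auto)
      thus ?thesis by (rule finite_image_set)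
    qed
    show ?thesis unfolding CC_def by (rule Max_ge[OF fin]) (use AP cA in auto)
  qed
  finally show ?thesis by simp
qed

end
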